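(* Let $G=(V,E)$ be a finite graph, $f:V\to[0,r]$, and $C$ any vertex cover of (the underlying undirected graph of) $B_{0,f}$. Define $g_C(u)=f(u)$ for $u\in V\setminus C$ and $g_C(u)=\max\bigl(0,\max_{v\in V\setminus C}(f(v)-\mathrm{dist}_G(u,v))\bigr)$ for $u\in C$, where a maximum over an empty set is $0$. Then $g_C$ is Lipschitz.
   Context: $\mathrm{dist}_G$ is the shortest-path distance (taken to be $+\infty$ between different connected components, with $f(v)-\infty=-\infty$). $g$ is Lipschitz if $|g(x)-g(y)|\le\mathrm{dist}_G(x,y)$ for all $x,y$. $VS_f(x,y)=|f(x)-f(y)|-\mathrm{dist}_G(x,y)$ if positive, else $0$; $B_{0,f}$ is the directed graph on $V$ with edges $\{(x,y):VS_f(x,y)>0,\ f(x)<f(y)\}$. *)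

theory Defs
  imports Complex_Main "HOL-Library.Extended_Real"
begin

definition graph :: "'a set \<Rightarrow> 'a set set \<Rightarrow> bool" where
  "graph V E \<longleftrightarrow> finite V \<and> (\<forall>e\<in>E. e \<subseteq> V \<and> card e = 2)"

definition walk_len :: "'a set \<Rightarrow> 'a set set \<Rightarrow> nat \<Rightarrow> 'a \<Rightarrow> 'a \<Rightarrow> bool" where
  "walk_len V E n u v \<longleftrightarrow> u \<in> V \<and> v \<in> V \<and>
     (\<exists>p::nat \<Rightarrow> 'a. p 0 = u \<and> p n = v \<and> (\<forall>i<n. {p i, p (Suc i)} \<in> E))"

definition gdist :: "'a set \<Rightarrow> 'a set set \<Rightarrow> 'a \<Rightarrow> 'a \<Rightarrow> ereal" where
  "gdist V E u v = (if \<exists>n. walk_len V E n u v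
                    then ereal (real (LEAST n. walk_len V E n u v)) else \<infinity>)"

definition lipschitz_graph :: "'a set \<Rightarrow> 'a set set \<Rightarrow> ('a \<Rightarrow> ereal) \<Rightarrow> bool" where
  "lipschitz_graph V E g \<longleftrightarrow> (\<forall>x\<in>V. \<forall>y\<in>V. \<bar>g x - g y\<bar> \<le> gdist V E x y)"

definition VS :: "'a set \<Rightarrow> 'a set set \<Rightarrow> ('a \<Rightarrow> real) \<Rightarrow> 'a \<Rightarrow> 'a \<Rightarrow> ereal" where
  "VS V E f x y = (let d = ereal \<bar>f x - f y\<bar> - gdist V E x y in if d > 0 then d else 0)"

definition B0 :: "'a set \<Rightarrow> 'a set set \<Rightarrow> ('a \<Rightarrow> real) \<Rightarrow> ('a \<times> 'a) set" where
  "B0 V E f = {(x, y). x \<in> V \<and> y \<in> V \<and> VS V E f x y > 0 \<and> f x < f y}"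

definition vertex_cover :: "'a set \<Rightarrow> ('a \<times> 'a) set \<Rightarrow> 'a set \<Rightarrow> bool" where
  "vertex_cover V A C \<longleftrightarrow> C \<subseteq> V \<and> (\<forall>(x, y)\<in>A. x \<in> C \<or> y \<in> C)"

definition Max0 :: "ereal set \<Rightarrow> ereal" where
  "Max0 S = (if S = {} then 0 else Max S)"

definition gC :: "'a set \<Rightarrow> 'a set set \<Rightarrow> ('a \<Rightarrow> real) \<Rightarrow> 'a set \<Rightarrow> 'a \<Rightarrow> ereal" where
  "gC V E f C u = (if u \<in> C
      then max 0 (Max0 ((\<lambda>v. ereal (f v) - gdist V E u v) ` (V - C)))
      else ereal (f u))"

end

theory Submission
  imports Defs
begin

lemma walk_rev:
  assumes "walk_len V E n u v" shows "walk_len V E n v u"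
proof -
  from assms obtain p where p: "u \<in> V" "v \<in> V" "p 0 = u" "p n = v" "\<forall>i<n. {p i, p (Suc i)} \<in> E"
    unfolding walk_len_def by blast
  define q where "q i = p (n - i)" for i
  have "\<forall>i<n. {q i, q (Suc i)} \<in> E"
  proof (intro allI impI)
    fix i assume i: "i < n"
    have "{p (n - Suc i), p (Suc (n - Suc i))} \<in> E" using p(5) i by auto
    moreover have "Suc (n - Suc i) = n - i" using i by auto
    ultimately show "{q i, q (Suc i)} \<in> E" unfolding q_def by (simp add: insert_commute)
  qed
  moreover have "q 0 = v" "q n = u" using p unfolding q_def by auto
  ultimately show ?thesis using p unfolding walk_len_def by blast
qed

lemma walk_app:
  assumes "walk_len V E m u v" "walk_len V E n v w" shows "walk_len V E (m + n) u w"
proof -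
  from assms(1) obtain p where p: "u \<in> V" "v \<in> V" "p 0 = u" "p m = v" "\<forall>i<m. {p i, p (Suc i)} \<in> E"
    unfolding walk_len_def by blast
  from assms(2) obtain q where q: "w \<in> V" "q 0 = v" "q n = w" "\<forall>i<n. {q i, q (Suc i)} \<in> E"
    unfolding walk_len_def by blast
  define r where "r i = (if i \<le> m then p i else q (i - m))" for i
  have "\<forall>i<m+n. {r i, r (Suc i)} \<in> E"
  proof (intro allI impI)
    fix i assume i: "i < m + n"
    show "{r i, r (Suc i)} \<in> E"
    proof (cases "i < m")
      case True then show ?thesis using p(5) unfolding r_def by auto
    next
      case False
      then have "i - m < n" "Suc i - m = Suc (i - m)" using i by auto
      then have "{q (i - m), q (Suc (i - m))} \<in> E" using q(4) by auto
      moreover have "r i = q (i - m)" using False p(4) q(2) unfolding r_def by auto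
      moreover have "r (Suc i) = q (Suc (i - m))" using False \<open>Suc i - m = Suc (i - m)\<close> unfolding r_def by auto
      ultimately show ?thesis by simp
    qed
  qed
  moreover have "r 0 = u" "r (m + n) = w" using p q unfolding r_def by auto
  ultimately show ?thesis using p q unfolding walk_len_def by blast
qed

lemma gdist_sym: "gdist V E u v = gdist V E v u"
proof -
  have "walk_len V E n u v = walk_len V E n v u" for n using walk_rev by metis
  then show ?thesis unfolding gdist_def by simp
qed

lemma gdist_refl: "u \<in> V \<Longrightarrow> gdist V E u u = 0"
proof -
  assume "u \<in> V"
  then have w: "walk_len V E 0 u u" unfolding walk_len_def by auto
  then have "(LEAST n. walk_len V E n u u) = 0" by (simp add: Least_eq_0)
  then show ?thesis using w unfolding gdist_def by auto
qed

lemma gdist_nonneg: "0 \<le> gdist V E u v"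
  unfolding gdist_def by auto

lemma gdist_tri: "gdist V E x z \<le> gdist V E x y + gdist V E y z"
proof (cases "(\<exists>n. walk_len V E n x y) \<and> (\<exists>n. walk_len V E n y z)")
  case True
  define a where "a = (LEAST n. walk_len V E n x y)"
  define b where "b = (LEAST n. walk_len V E n y z)"
  have wa: "walk_len V E a x y" unfolding a_def using True by (meson LeastI)
  have wb: "walk_len V E b y z" unfolding b_def using True by (meson LeastI)
  have w: "walk_len V E (a + b) x z" using walk_app[OF wa wb] .
  then have "(LEAST n. walk_len V E n x z) \<le> a + b" by (rule Least_le)
  then show ?thesis using w True unfolding gdist_def a_def[symmetric] b_def[symmetric] by auto
next
  case False
  then have "gdist V E x y = \<infinity> \<or> gdist V E y z = \<infinity>"
    unfolding gdist_def by auto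
  then have "gdist V E x y + gdist V E y z = \<infinity>"
  proof
    assume "gdist V E x y = \<infinity>" then show ?thesis using gdist_nonneg[of V E y z] by auto
  next
    assume "gdist V E y z = \<infinity>" then show ?thesis using gdist_nonneg[of V E x y] by auto
  qed
  then show ?thesis by (metis ereal_less_eq(1))
qed

theorem claim3p2:
  fixes V :: "'a set" and E :: "'a set set" and f :: "'a \<Rightarrow> real" and r :: real and C :: "'a set"
  assumes "graph V E"
    and "\<forall>v\<in>V. 0 \<le> f v \<and> f v \<le> r"
    and "vertex_cover V (B0 V E f) C"
  shows "lipschitz_graph V E (gC V E f C)"
proof -
  let ?d = "gdist V E"
  define h where "h u = max 0 (Max0 ((\<lambda>v. ereal (f v) - ?d u v) ` (V - C)))" for u
  have finV: "finite V" using assms(1) unfolding graph_def by auto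
  have A: "ereal \<bar>f u - f v\<bar> \<le> ?d u v" if u: "u \<in> V - C" and v: "v \<in> V - C" for u v
  proof (rule ccontr)
    assume nl: "\<not> ereal \<bar>f u - f v\<bar> \<le> ?d u v"
    have vs: "VS V E f a b > 0" if "ereal \<bar>f a - f b\<bar> - ?d a b > 0" for a b
      using that unfolding VS_def Let_def by auto
    have pos: "ereal \<bar>f u - f v\<bar> - ?d u v > 0"
      using nl gdist_nonneg[of V E u v] by (cases "?d u v") auto
    have pos2: "ereal \<bar>f v - f u\<bar> - ?d v u > 0"
      using pos by (simp add: gdist_sym abs_minus_commute)
    have ne: "f u \<noteq> f v" using pos gdist_nonneg[of V E u v] by (cases "?d u v") auto
    show False
    proof (cases "f u < f v")
      case True
      then have "(u, v) \<in> B0 V E f" using u v vs[OF pos] unfolding B0_def by auto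
      then show False using assms(3) u v unfolding vertex_cover_def by auto
    next
      case False
      then have "f v < f u" using ne by auto
      then have "(v, u) \<in> B0 V E f" using u v vs[OF pos2] unfolding B0_def by auto
      then show False using assms(3) u v unfolding vertex_cover_def by auto
    qed
  qed
  have fin: "finite ((\<lambda>v. ereal (f v) - ?d u v) ` (V - C))" for u using finV by auto
  have elem_le: "ereal (f v) - ?d u v \<le> h u" if "v \<in> V - C" for u v
  proof -
    have "ereal (f v) - ?d u v \<le> Max0 ((\<lambda>v. ereal (f v) - ?d u v) ` (V - C))"
      unfolding Max0_def using that fin[of u] by auto
    then show ?thesis unfolding h_def by (rule order_trans[OF _ max.cobounded2])
  qed
  have Max0_le: "Max0 ((\<lambda>v. ereal (f v) - ?d u v) ` (V - C)) \<le> b"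
    if "0 \<le> b" "\<And>v. v \<in> V - C \<Longrightarrow> ereal (f v) - ?d u v \<le> b" for u b
    unfolding Max0_def using that fin[of u] by (auto simp: Max_le_iff)
  have B: "h u = ereal (f u)" if u: "u \<in> V - C" for u
  proof (rule antisym)
    have "ereal (f v) - ?d u v \<le> ereal (f u)" if v: "v \<in> V - C" for v
    proof -
      have "ereal \<bar>f u - f v\<bar> \<le> ?d u v" using A u v by auto
      then show ?thesis using gdist_nonneg[of V E u v] by (cases "?d u v") auto
    qed
    moreover have "0 \<le> ereal (f u)" using assms(2) u by auto
    ultimately show "h u \<le> ereal (f u)" unfolding h_def using Max0_le[of "ereal (f u)" u] by auto
    show "ereal (f u) \<le> h u" using elem_le[OF u, of u] gdist_refl[of u V E] u by auto
  qed
  have g_eq: "gC V E f C u = h u" if "u \<in> V" for u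
    using B that unfolding gC_def h_def by auto
  have h0: "0 \<le> h u" for u unfolding h_def by auto
  have hfin: "h u \<noteq> \<infinity>" for u
  proof -
    have "Max0 ((\<lambda>v. ereal (f v) - ?d u v) ` (V - C)) \<le> ereal (Max (insert 0 (f ` V)))"
    proof (rule Max0_le)
      show "0 \<le> ereal (Max (insert 0 (f ` V)))" using finV by auto
      fix v assume v: "v \<in> V - C"
      have "f v \<le> Max (insert 0 (f ` V))" using finV v by auto
      then show "ereal (f v) - ?d u v \<le> ereal (Max (insert 0 (f ` V)))"
        using gdist_nonneg[of V E u v] by (cases "?d u v") auto
    qed
    then show ?thesis unfolding h_def
      by (cases "Max0 ((\<lambda>v. ereal (f v) - ?d u v) ` (V - C))") (auto simp: max_def)
  qed
  have Cl: "h x \<le> h y + ?d x y" for x y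
  proof (cases "?d x y")
    case PInf then show ?thesis using h0[of y] by auto
  next
    case MInf then show ?thesis using gdist_nonneg[of V E x y] by auto
  next
    case (real c)
    have "Max0 ((\<lambda>v. ereal (f v) - ?d x v) ` (V - C)) \<le> h y + ?d x y"
    proof (rule Max0_le)
      show "0 \<le> h y + ?d x y" using h0[of y] gdist_nonneg[of V E x y] by auto
      fix v assume v: "v \<in> V - C"
      have t: "?d y v \<le> ?d y x + ?d x v" by (rule gdist_tri)
      have e: "ereal (f v) - ?d y v \<le> h y" using elem_le[OF v] .
      show "ereal (f v) - ?d x v \<le> h y + ?d x y"
      proof (cases "?d x v")
        case PInf then show ?thesis using h0[of y] real by auto
      next
        case MInf then show ?thesis using gdist_nonneg[of V E x v] by auto
      next
        case (real c2)
        then have "?d y v \<le> ereal (c + c2)" using t \<open>?d x y = ereal c\<close> by (simp add: gdist_sym)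
        moreover have "0 \<le> ?d y v" by (rule gdist_nonneg)
        ultimately obtain c3 where c3: "?d y v = ereal c3" "c3 \<le> c + c2"
          by (cases "?d y v") auto
        then show ?thesis using e real \<open>?d x y = ereal c\<close> h0[of y] hfin[of y]
          by (cases "h y") auto
      qed
    qed
    then show ?thesis unfolding h_def using h0[of y] gdist_nonneg[of V E x y]
      by (auto simp: h_def)
  qed
  show ?thesis unfolding lipschitz_graph_def
  proof (intro ballI)
    fix x y assume x: "x \<in> V" and y: "y \<in> V"
    have 1: "h x \<le> h y + ?d x y" by (rule Cl)
    have 2: "h y \<le> h x + ?d x y" using Cl[of y x] by (simp add: gdist_sym)
    obtain a where a: "h x = ereal a" using hfin[of x] h0[of x] by (cases "h x") auto
    obtain b where b: "h y = ereal b" using hfin[of y] h0[of y] by (cases "h y") auto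
    have "\<bar>h x - h y\<bar> \<le> ?d x y"
      using 1 2 a b by (cases "?d x y") auto
    then show "\<bar>gC V E f C x - gC V E f C y\<bar> \<le> ?d x y" using g_eq x y by simp
  qed
qed

end
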